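(* Let $f:2^{\mathcal N}\to\mathbb R_{\ge0}$ be non-negative submodular, and let $\mathcal N$ be partitioned into non-empty parts $P_1,\dots,P_k$, each containing a dummy element $d_j\in P_j$ with $f(S)=f(S\setminus\{d_1,\dots,d_k\})$ for all $S$. Consider the Smooth Residual Random Greedy algorithm with parameter $T$: $S_0=\emptyset$; for $i=1,\dots,T$, set $S_i=S_{i-1}$, let $M_i$ consist of, for each $j\in I(S_{i-1})$, one element of $P_j$ maximizing $f(S_{i-1}\cup\{u\})-f(S_{i-1})$ over $u\in P_j$; pick $j$ uniformly at random from $\{1,\dots,k\}$ and, if $j\in I(S_{i-1})$, let $u_i$ be the element of $M_i$ in $P_j$ and set $S_i=S_{i-1}\cup\{u_i\}$. Then for every $i=1,\dots,T$, $$\mathbb E[f(O_{S_i}\cup S_i)]\ge\Big(1-\frac2k\Big)\mathbb E[f(O_{S_{i-1}}\cup S_{i-1})]+\frac1k\,\mathbb E[f(S_{i-1})].$$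
   Context: A set function $f$ is submodular if $f(A\cup B)+f(A\cap B)\le f(A)+f(B)$ for all $A,B\subseteq\mathcal N$. The partition matroid has independent sets $\mathcal I=\{S\subseteq\mathcal N: |S\cap P_j|\le1\ \forall j\}$. For $S\subseteq\mathcal N$, $I(S)=\{j: P_j\cap S=\emptyset\}$. For $S\in\mathcal I$, $O_S$ denotes a fixed set $A\subseteq\mathcal N\setminus S$ maximizing $f(S\cup A)$ subject to $S\cup A\in\mathcal I$, chosen (possible thanks to the dummy elements) with $|O_S|=k-|S|$, i.e., containing exactly one element from each part $P_j$, $j\in I(S)$. *)

theory Defs
  imports "HOL-Probability.Probability"
begin

text \<open>Parts are indexed by 1..k; P j is the j-th part.\<close>

definition submodular_on :: "'a set \<Rightarrow> ('a set \<Rightarrow> real) \<Rightarrow> bool" where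
  "submodular_on N f \<longleftrightarrow>
     (\<forall>A B. A \<subseteq> N \<longrightarrow> B \<subseteq> N \<longrightarrow> f (A \<union> B) + f (A \<inter> B) \<le> f A + f B)"

definition pm_indep :: "nat \<Rightarrow> (nat \<Rightarrow> 'a set) \<Rightarrow> 'a set \<Rightarrow> bool" where
  "pm_indep k P S \<longleftrightarrow> S \<subseteq> (\<Union>j\<in>{1..k}. P j) \<and> (\<forall>j\<in>{1..k}. card (S \<inter> P j) \<le> 1)"

definition free_parts :: "nat \<Rightarrow> (nat \<Rightarrow> 'a set) \<Rightarrow> 'a set \<Rightarrow> nat set" where
  "free_parts k P S = {j \<in> {1..k}. P j \<inter> S = {}}"

text \<open>Distribution of S_i in Smooth Residual Random Greedy. m i S j is the element of M_i
  lying in part P j when the current solution is S (tie-breaking rule).\<close>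
fun srrg :: "nat \<Rightarrow> (nat \<Rightarrow> 'a set) \<Rightarrow> (nat \<Rightarrow> 'a set \<Rightarrow> nat \<Rightarrow> 'a) \<Rightarrow> nat \<Rightarrow> 'a set pmf" where
  "srrg k P m 0 = return_pmf {}"
| "srrg k P m (Suc i) =
     bind_pmf (srrg k P m i)
       (\<lambda>S. map_pmf (\<lambda>j. if j \<in> free_parts k P S then insert (m (Suc i) S j) S else S)
              (pmf_of_set {1..k}))"

end

theory Submission
  imports Defs
begin


lemma integral_bind_pmf_fin:
  fixes g :: "'b \<Rightarrow> real"
  assumes A: "finite A" and sub: "\<And>x y. x \<in> set_pmf M \<Longrightarrow> y \<in> set_pmf (N x) \<Longrightarrow> y \<in> A"
    and finM: "finite (set_pmf M)"
  shows "measure_pmf.expectation (bind_pmf M N) g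
       = measure_pmf.expectation M (\<lambda>x. measure_pmf.expectation (N x) g)"
proof -
  have "measure_pmf.expectation (bind_pmf M N) g = (\<Sum>a\<in>A. g a * pmf (bind_pmf M N) a)"
    by (rule integral_measure_pmf_real[OF A]) (use sub in auto)
  also have "\<dots> = (\<Sum>a\<in>A. measure_pmf.expectation M (\<lambda>x. g a * pmf (N x) a))"
    by (simp add: pmf_bind)
  also have "\<dots> = measure_pmf.expectation M (\<lambda>x. \<Sum>a\<in>A. g a * pmf (N x) a)"
    using Bochner_Integration.integral_sum[where I=A and M="measure_pmf M" and f="\<lambda>a x. g a * pmf (N x) a"] by (simp add: integrable_measure_pmf_finite[OF finM])
  also have "\<dots> = measure_pmf.expectation M (\<lambda>x. measure_pmf.expectation (N x) g)"
  proof (rule integral_cong_AE)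
    show "AE x in measure_pmf M. (\<Sum>a\<in>A. g a * pmf (N x) a) = measure_pmf.expectation (N x) g"
      unfolding AE_measure_pmf_iff
      by (auto intro!: integral_measure_pmf_real[OF A, symmetric] sub)
  qed auto
  finally show ?thesis .
qed

lemma sum_gain:
  fixes f :: "'a set \<Rightarrow> real"
  assumes submod: "submodular_on N f" and fin: "finite J" and inj: "inj_on u J"
    and uN: "u ` J \<subseteq> N" and YN: "Y \<subseteq> N"
  shows "(\<Sum>j\<in>J. f (insert (u j) Y) - f Y) \<ge> f (Y \<union> u ` J) - f Y"
  using fin inj uN
proof (induction J rule: finite_induct)
  case empty then show ?case by simp
next
  case (insert j J)
  have IH: "(\<Sum>j\<in>J. f (insert (u j) Y) - f Y) \<ge> f (Y \<union> u ` J) - f Y"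
    using insert by auto
  have step: "f (insert (u j) (Y \<union> u ` J)) - f (Y \<union> u ` J) \<le> f (insert (u j) Y) - f Y"
  proof (cases "u j \<in> Y")
    case True then show ?thesis by (simp add: insert_absorb)
  next
    case False
    have nj: "u j \<notin> u ` J" using insert by auto
    have "f (insert (u j) Y \<union> (Y \<union> u ` J)) + f (insert (u j) Y \<inter> (Y \<union> u ` J))
          \<le> f (insert (u j) Y) + f (Y \<union> u ` J)"
      using submod[unfolded submodular_on_def, rule_format, of "insert (u j) Y" "Y \<union> u ` J"] insert YN by auto
    moreover have "insert (u j) Y \<inter> (Y \<union> u ` J) = Y" using False nj by auto
    moreover have "insert (u j) Y \<union> (Y \<union> u ` J) = insert (u j) (Y \<union> u ` J)" by auto
    ultimately show ?thesis by simp
  qed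
  show ?case using IH step insert by (simp add: Un_insert_right)
qed

lemma sum_loss:
  fixes f :: "'a set \<Rightarrow> real"
  assumes submod: "submodular_on N f" and fin: "finite J" and inj: "inj_on w J"
    and oY: "w ` J \<subseteq> Y" and YN: "Y \<subseteq> N"
  shows "(\<Sum>j\<in>J. f Y - f (Y - {w j})) \<le> f Y - f (Y - w ` J)"
  using fin inj oY
proof (induction J rule: finite_induct)
  case empty then show ?case by simp
next
  case (insert j J)
  have IH: "(\<Sum>j\<in>J. f Y - f (Y - {w j})) \<le> f Y - f (Y - w ` J)"
    using insert by auto
  have nj: "w j \<notin> w ` J" using insert by auto
  have oj: "w j \<in> Y" using insert by auto
  have "f ((Y - {w j}) \<union> (Y - w ` J)) + f ((Y - {w j}) \<inter> (Y - w ` J))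
          \<le> f (Y - {w j}) + f (Y - w ` J)"
    using submod[unfolded submodular_on_def, rule_format, of "Y - {w j}" "Y - w ` J"] YN by auto
  moreover have "(Y - {w j}) \<union> (Y - w ` J) = Y" using nj oj by blast
  moreover have "(Y - {w j}) \<inter> (Y - w ` J) = Y - w ` insert j J" by auto
  ultimately have step: "f Y - f (Y - {w j}) \<le> f (Y - w ` J) - f (Y - w ` insert j J)" by simp
  show ?case using IH step insert by simp
qed


theorem lemma8:
  fixes N :: "'a set" and f :: "'a set \<Rightarrow> real" and k T i :: nat
    and P :: "nat \<Rightarrow> 'a set" and d :: "nat \<Rightarrow> 'a"
    and m :: "nat \<Rightarrow> 'a set \<Rightarrow> nat \<Rightarrow> 'a" and Opt :: "'a set \<Rightarrow> 'a set"
  assumes finN: "finite N"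
    and k_pos: "k \<ge> 1"
    and nonneg: "\<forall>S. S \<subseteq> N \<longrightarrow> f S \<ge> 0"
    and submod: "submodular_on N f"
    and parts_cover: "(\<Union>j\<in>{1..k}. P j) = N"
    and parts_disj: "\<forall>j1\<in>{1..k}. \<forall>j2\<in>{1..k}. j1 \<noteq> j2 \<longrightarrow> P j1 \<inter> P j2 = {}"
    and parts_ne: "\<forall>j\<in>{1..k}. P j \<noteq> {}"
    and dummy_in: "\<forall>j\<in>{1..k}. d j \<in> P j"
    and dummy: "\<forall>S. S \<subseteq> N \<longrightarrow> f S = f (S - d ` {1..k})"
    and greedy: "\<forall>i' S j. pm_indep k P S \<and> j \<in> free_parts k P S \<longrightarrow>
                   m i' S j \<in> P j \<and>
                   (\<forall>u\<in>P j. f (insert u S) - f S \<le> f (insert (m i' S j) S) - f S)"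
    and Opt_spec: "\<forall>S. pm_indep k P S \<longrightarrow>
                  Opt S \<subseteq> N - S \<and> pm_indep k P (S \<union> Opt S) \<and> card (Opt S) = k - card S \<and>
                  (\<forall>A. A \<subseteq> N - S \<and> pm_indep k P (S \<union> A) \<longrightarrow> f (S \<union> A) \<le> f (S \<union> Opt S))"
    and i_range: "1 \<le> i" "i \<le> T"
  shows "measure_pmf.expectation (srrg k P m i) (\<lambda>S. f (Opt S \<union> S))
         \<ge> (1 - 2 / real k) * measure_pmf.expectation (srrg k P m (i - 1)) (\<lambda>S. f (Opt S \<union> S))
           + (1 / real k) * measure_pmf.expectation (srrg k P m (i - 1)) f"
proof -
  obtain i0 where i0: "i = Suc i0" using i_range(1) by (cases i) auto
  have kne: "{1..k} \<noteq> {}" using k_pos by auto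
  have indep_N: "S \<subseteq> N" if "pm_indep k P S" for S
    using that parts_cover unfolding pm_indep_def by auto
  have card_parts: "card X = (\<Sum>l\<in>{1..k}. card (X \<inter> P l))" if "X \<subseteq> N" for X
  proof -
    have "X = (\<Union>l\<in>{1..k}. X \<inter> P l)" using that parts_cover by auto
    moreover have "card (\<Union>l\<in>{1..k}. X \<inter> P l) = (\<Sum>l\<in>{1..k}. card (X \<inter> P l))"
      by (rule card_UN_disjoint) (use that finN parts_disj in \<open>auto intro: finite_subset\<close>)
    ultimately show ?thesis by simp
  qed
  have indep_mono: "pm_indep k P Z" if "pm_indep k P X" "Z \<subseteq> X" for X Z
  proof -
    have fX: "finite X" using indep_N[OF that(1)] finN finite_subset by blast
    have "card (Z \<inter> P j) \<le> 1" if "j \<in> {1..k}" for j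
    proof -
      have "card (Z \<inter> P j) \<le> card (X \<inter> P j)"
        using \<open>Z \<subseteq> X\<close> fX by (intro card_mono) auto
      moreover have "card (X \<inter> P j) \<le> 1" using \<open>pm_indep k P X\<close> that unfolding pm_indep_def by blast
      ultimately show ?thesis by linarith
    qed
    then show ?thesis using that unfolding pm_indep_def by auto
  qed
  have indep_ins: "pm_indep k P (insert u S)"
    if "pm_indep k P S" "j \<in> free_parts k P S" "u \<in> P j" for S j u
  proof -
    have j: "j \<in> {1..k}" "P j \<inter> S = {}" using that(2) unfolding free_parts_def by auto
    have "card (insert u S \<inter> P l) \<le> 1" if l: "l \<in> {1..k}" for l
    proof (cases "l = j")
      case True
      then have "insert u S \<inter> P l = {u}" using j \<open>u \<in> P j\<close> by auto
      then show ?thesis by simp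
    next
      case False
      then have "u \<notin> P l" using parts_disj j l \<open>u \<in> P j\<close> by blast
      then have "insert u S \<inter> P l = S \<inter> P l" by auto
      then show ?thesis using \<open>pm_indep k P S\<close> l unfolding pm_indep_def by auto
    qed
    then show ?thesis using that j unfolding pm_indep_def by auto
  qed
  define g where "g = (\<lambda>S j. if j \<in> free_parts k P S then insert (m (Suc i0) S j) S else S)"
  have supp: "\<forall>S\<in>set_pmf (srrg k P m n). pm_indep k P S" for n
  proof (induction n)
    case 0
    then show ?case by (simp add: pm_indep_def)
  next
    case (Suc n)
    show ?case
    proof
      fix S' assume "S' \<in> set_pmf (srrg k P m (Suc n))"
      then obtain S j where S: "S \<in> set_pmf (srrg k P m n)" and j: "j \<in> {1..k}"
        and S': "S' = (if j \<in> free_parts k P S then insert (m (Suc n) S j) S else S)"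
        using kne by auto
      have iS: "pm_indep k P S" using Suc S by blast
      show "pm_indep k P S'"
      proof (cases "j \<in> free_parts k P S")
        case True
        then have "m (Suc n) S j \<in> P j" using greedy iS by blast
        then show ?thesis using S' True indep_ins[OF iS True] by simp
      qed (use S' iS in simp)
    qed
  qed
  have fin_supp: "finite (set_pmf (srrg k P m n))" for n
  proof (rule finite_subset[of _ "Pow N"])
    show "set_pmf (srrg k P m n) \<subseteq> Pow N" using supp indep_N by blast
  qed (use finN in simp)
  define F where "F = (\<lambda>S. f (Opt S \<union> S))"
  define M where "M = srrg k P m i0"
  have srrg_i: "srrg k P m i = bind_pmf M (\<lambda>S. map_pmf (g S) (pmf_of_set {1..k}))"
    unfolding i0 M_def g_def by simp
  have key: "(\<Sum>j\<in>{1..k}. F (g S j)) \<ge> (real k - 2) * F S + f S" if iS: "pm_indep k P S" for S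
  proof -
    define I where "I = free_parts k P S"
    define Op where "Op = Opt S"
    define Y where "Y = Op \<union> S"
    define u where "u = (\<lambda>j. m (Suc i0) S j)"
    have SN: "S \<subseteq> N" using indep_N iS .
    have finS: "finite S" using SN finN finite_subset by blast
    have OS: "Op \<subseteq> N - S" "pm_indep k P (S \<union> Op)" "card Op = k - card S"
      "\<And>A. A \<subseteq> N - S \<Longrightarrow> pm_indep k P (S \<union> A) \<Longrightarrow> f (S \<union> A) \<le> f (S \<union> Op)"
    proof -
      have os: "Opt S \<subseteq> N - S \<and> pm_indep k P (S \<union> Opt S) \<and> card (Opt S) = k - card S \<and>
                  (\<forall>A. A \<subseteq> N - S \<and> pm_indep k P (S \<union> A) \<longrightarrow> f (S \<union> A) \<le> f (S \<union> Opt S))"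
        using Opt_spec iS by blast
      show "Op \<subseteq> N - S" "pm_indep k P (S \<union> Op)" "card Op = k - card S"
        using os unfolding Op_def by simp_all
      show "\<And>A. A \<subseteq> N - S \<Longrightarrow> pm_indep k P (S \<union> A) \<Longrightarrow> f (S \<union> A) \<le> f (S \<union> Op)"
        using os unfolding Op_def by blast
    qed
    have YN: "Y \<subseteq> N" using OS(1) SN unfolding Y_def by auto
    have finY: "finite Y" using YN finN finite_subset by blast
    have finO: "finite Op" using OS(1) finN finite_subset by blast
    have Yc: "card (Y \<inter> P l) \<le> 1" if "l \<in> {1..k}" for l
      using OS(2) that unfolding pm_indep_def Y_def by (simp add: Un_commute)
    have I_sub: "I \<subseteq> {1..k}" unfolding I_def free_parts_def by auto
    have cardS: "card S \<le> k"
    proof -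
      have "card S = (\<Sum>l\<in>{1..k}. card (S \<inter> P l))" using card_parts SN by blast
      also have "\<dots> \<le> (\<Sum>l\<in>{1..k}. 1)" by (rule sum_mono) (use iS in \<open>auto simp: pm_indep_def\<close>)
      finally show ?thesis by simp
    qed
    have cardY: "card Y = k"
    proof -
      have "Op \<inter> S = {}" using OS(1) by auto
      then have "card Y = card Op + card S" unfolding Y_def using finO finS card_Un_disjoint by blast
      then show ?thesis using OS(3) cardS by simp
    qed
    have OPj: "\<exists>x. Op \<inter> P j = {x}" if j: "j \<in> I" for j
    proof -
      have j1: "j \<in> {1..k}" and jS: "P j \<inter> S = {}" using j unfolding I_def free_parts_def by auto
      have "Op \<inter> P j \<noteq> {}"
      proof
        assume e: "Op \<inter> P j = {}"
        then have "Y \<inter> P j = {}" using jS unfolding Y_def by auto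
        have "k = (\<Sum>l\<in>{1..k}. card (Y \<inter> P l))" using card_parts[OF YN] cardY by simp
        also have "\<dots> = card (Y \<inter> P j) + (\<Sum>l\<in>{1..k} - {j}. card (Y \<inter> P l))"
          using j1 by (simp add: sum.remove)
        also have "\<dots> \<le> 0 + (\<Sum>l\<in>{1..k} - {j}. 1)"
          using \<open>Y \<inter> P j = {}\<close> by (intro add_mono sum_mono Yc) auto
        also have "\<dots> = k - 1" using j1 by simp
        finally show False using k_pos by simp
      qed
      then obtain x where x: "x \<in> Op \<inter> P j" by blast
      have c1: "card (Op \<inter> P j) \<le> card (Y \<inter> P j)"
        using finY unfolding Y_def by (intro card_mono) auto
      have "y = x" if y: "y \<in> Op \<inter> P j" for y
      proof (rule ccontr)
        assume "y \<noteq> x"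
        then have "card {x, y} = 2" by simp
        moreover have "card {x, y} \<le> card (Op \<inter> P j)" using x y finO by (intro card_mono) auto
        ultimately show False using c1 Yc[OF j1] by simp
      qed
      then have "Op \<inter> P j = {x}" using x by blast
      then show ?thesis by blast
    qed
    define w where "w = (\<lambda>j. THE x. Op \<inter> P j = {x})"
    have w: "Op \<inter> P j = {w j}" if jI: "j \<in> I" for j
    proof -
      obtain x where x: "Op \<inter> P j = {x}" using OPj[OF jI] by blast
      have "w j = x" unfolding w_def by (rule the_equality) (use x in auto)
      then show ?thesis using x by simp
    qed
    have I1: "j \<in> {1..k}" "P j \<inter> S = {}" if "j \<in> I" for j
      using that unfolding I_def free_parts_def by auto
    have wP: "w j \<in> P j" "w j \<in> Op" if "j \<in> I" for j using w[OF that] by auto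
    have YPj: "Y \<inter> P j = {w j}" if "j \<in> I" for j
      using w[OF that] I1[OF that] unfolding Y_def by auto
    have inj_w: "inj_on w I"
    proof (rule inj_onI)
      fix a b assume a: "a \<in> I" and b: "b \<in> I" and e: "w a = w b"
      show "a = b"
      proof (rule ccontr)
        assume "a \<noteq> b"
        then have "P a \<inter> P b = {}" using parts_disj I1(1)[OF a] I1(1)[OF b] by blast
        then show False using wP(1)[OF a] wP(1)[OF b] e by auto
      qed
    qed
    have uP: "u j \<in> P j" if "j \<in> I" for j
      using greedy iS that unfolding u_def I_def by blast
    have inj_u: "inj_on u I"
    proof (rule inj_onI)
      fix a b assume a: "a \<in> I" and b: "b \<in> I" and e: "u a = u b"
      show "a = b"
      proof (rule ccontr)
        assume "a \<noteq> b"
        then have "P a \<inter> P b = {}" using parts_disj I1(1)[OF a] I1(1)[OF b] by blast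
        then show False using uP[OF a] uP[OF b] e by auto
      qed
    qed
    have Op_eq: "Op = w ` I"
    proof
      show "w ` I \<subseteq> Op" using wP by auto
      show "Op \<subseteq> w ` I"
      proof
        fix x assume xO: "x \<in> Op"
        then obtain l where l: "l \<in> {1..k}" "x \<in> P l" using OS(1) parts_cover by auto
        have xS: "x \<notin> S" using xO OS(1) by auto
        have "l \<in> I"
        proof (rule ccontr)
          assume "l \<notin> I"
          then obtain s where s: "s \<in> S" "s \<in> P l" using l unfolding I_def free_parts_def by auto
          have "{s, x} \<subseteq> Y \<inter> P l" using s xO l unfolding Y_def by auto
          then have "card {s, x} \<le> card (Y \<inter> P l)" using finY by (intro card_mono) auto
          moreover have "s \<noteq> x" using s xS by auto
          then have "card {s, x} = 2" by simp
          ultimately show False using Yc[OF l(1)] by simp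
        qed
        then show "x \<in> w ` I" using w[of l] xO l by auto
      qed
    qed
    have YS: "Y - w ` I = S" using Op_eq OS(1) unfolding Y_def by auto
    have per: "F (g S j) \<ge> f (insert (u j) Y) + f (Y - {w j}) - f Y" if j: "j \<in> I" for j
    proof -
      define S' where "S' = insert (u j) S"
      have gS: "g S j = S'" using j unfolding g_def S'_def u_def I_def by simp
      have iS': "pm_indep k P S'" unfolding S'_def using indep_ins[OF iS _ uP[OF j]] j I_def by blast
      have wS: "w j \<notin> S" using wP[OF j] OS(1) by auto
      have eqU: "S' \<union> (Op - {w j}) = insert (u j) (Y - {w j})" unfolding S'_def Y_def using wS by auto
      have uA: "u j \<notin> Op - {w j}" using w[OF j] uP[OF j] by auto
      have A1: "Op - {w j} \<subseteq> N - S'" using OS(1) uA unfolding S'_def by auto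
      have A2: "pm_indep k P (insert (u j) (Y - {w j}))"
      proof -
        have "card (insert (u j) (Y - {w j}) \<inter> P l) \<le> 1" if l: "l \<in> {1..k}" for l
        proof (cases "l = j")
          case True
          then have "insert (u j) (Y - {w j}) \<inter> P l = {u j}" using YPj[OF j] uP[OF j] by auto
          then show ?thesis by simp
        next
          case False
          then have "u j \<notin> P l" using parts_disj I1(1)[OF j] l uP[OF j] by blast
          then have "insert (u j) (Y - {w j}) \<inter> P l \<subseteq> Y \<inter> P l" by auto
          then have "card (insert (u j) (Y - {w j}) \<inter> P l) \<le> card (Y \<inter> P l)"
            using finY by (intro card_mono) auto
          then show ?thesis using Yc[OF l] by simp
        qed
        moreover have "insert (u j) (Y - {w j}) \<subseteq> (\<Union>j\<in>{1..k}. P j)"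
          using YN parts_cover uP[OF j] I1(1)[OF j] by auto
        ultimately show ?thesis unfolding pm_indep_def by auto
      qed
      have "f (insert (u j) (Y - {w j})) \<le> F S'"
      proof -
        have "f (S' \<union> (Op - {w j})) \<le> f (S' \<union> Opt S')"
        proof -
          have all: "\<forall>A. A \<subseteq> N - S' \<and> pm_indep k P (S' \<union> A) \<longrightarrow> f (S' \<union> A) \<le> f (S' \<union> Opt S')"
            using Opt_spec[rule_format, OF iS'] by blast
          have "pm_indep k P (S' \<union> (Op - {w j}))" using A2 eqU by simp
          then show ?thesis using all[rule_format, of "Op - {w j}"] A1 by blast
        qed
        then show ?thesis using eqU unfolding F_def by (simp add: Un_commute)
      qed
      moreover have "f (insert (u j) Y) + f (Y - {w j}) - f Y \<le> f (insert (u j) (Y - {w j}))"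
      proof (cases "u j = w j")
        case True
        have "f (Y - {w j}) \<le> f Y"
        proof -
          have e1: "S \<union> (Op - {w j}) = Y - {w j}" unfolding Y_def using wS by auto
          have p: "pm_indep k P (S \<union> (Op - {w j}))" by (rule indep_mono[OF OS(2)]) auto
          have "f (S \<union> (Op - {w j})) \<le> f (S \<union> Op)" by (rule OS(4)) (use OS(1) p in auto)
          moreover have "S \<union> Op = Y" unfolding Y_def by auto
          ultimately show ?thesis using e1 by simp
        qed
        moreover have "insert (u j) Y = Y" "insert (u j) (Y - {w j}) = Y"
          using True wP[OF j] unfolding Y_def by auto
        ultimately show ?thesis by simp
      next
        case False
        have uY: "u j \<notin> Y" using False YPj[OF j] uP[OF j] by auto
        have uN: "u j \<in> N" using uP[OF j] I1(1)[OF j] parts_cover by auto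
        have "f (insert (u j) (Y - {w j}) \<union> Y) + f (insert (u j) (Y - {w j}) \<inter> Y)
              \<le> f (insert (u j) (Y - {w j})) + f Y"
        proof -
          have sub: "insert (u j) (Y - {w j}) \<subseteq> N" using YN uN by auto
          show ?thesis by (rule submod[unfolded submodular_on_def, rule_format, OF sub YN])
        qed
        moreover have "insert (u j) (Y - {w j}) \<union> Y = insert (u j) Y" using wP[OF j] unfolding Y_def by auto
        moreover have "insert (u j) (Y - {w j}) \<inter> Y = Y - {w j}" using uY by auto
        ultimately show ?thesis by simp
      qed
      ultimately show ?thesis using gS by simp
    qed
    have finI: "finite I" using I_sub finite_subset by blast
    have uIN: "u ` I \<subseteq> N" using uP I1(1) parts_cover by blast
    have gain: "(\<Sum>j\<in>I. f (insert (u j) Y) - f Y) \<ge> f (Y \<union> u ` I) - f Y"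
      by (rule sum_gain[OF submod finI inj_u uIN YN])
    have loss: "(\<Sum>j\<in>I. f Y - f (Y - {w j})) \<le> f Y - f (Y - w ` I)"
      by (rule sum_loss[OF submod finI inj_w _ YN]) (use wP Y_def in auto)
    have nn: "f (Y \<union> u ` I) \<ge> 0" using nonneg YN uIN by simp
    have sumI: "(\<Sum>j\<in>I. F (g S j)) \<ge> (real (card I) - 2) * f Y + f S"
    proof -
      have "(\<Sum>j\<in>I. F (g S j)) \<ge> (\<Sum>j\<in>I. (f (insert (u j) Y) - f Y) - (f Y - f (Y - {w j})) + f Y)"
        using per by (intro sum_mono) auto
      also have "(\<Sum>j\<in>I. (f (insert (u j) Y) - f Y) - (f Y - f (Y - {w j})) + f Y)
          = (\<Sum>j\<in>I. f (insert (u j) Y) - f Y) - (\<Sum>j\<in>I. f Y - f (Y - {w j})) + real (card I) * f Y"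
        by (simp add: sum.distrib sum_subtractf)
      finally have h: "(\<Sum>j\<in>I. F (g S j)) \<ge> (\<Sum>j\<in>I. f (insert (u j) Y) - f Y) - (\<Sum>j\<in>I. f Y - f (Y - {w j})) + real (card I) * f Y" .
      have e2: "(real (card I) - 2) * f Y = real (card I) * f Y - 2 * f Y" by (simp add: left_diff_distrib)
      have loss': "(\<Sum>j\<in>I. f Y - f (Y - {w j})) \<le> f Y - f S" using loss YS by simp
      show ?thesis using h gain loss' nn e2 by linarith
    qed
    have gout: "g S j = S" if "j \<notin> I" for j using that unfolding g_def I_def by simp
    have "(\<Sum>j\<in>{1..k}. F (g S j)) = (\<Sum>j\<in>I. F (g S j)) + (\<Sum>j\<in>{1..k} - I. F (g S j))"
      using sum.subset_diff[OF I_sub, of "\<lambda>j. F (g S j)"] by simp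
    also have "(\<Sum>j\<in>{1..k} - I. F (g S j)) = real (k - card I) * F S"
      using gout I_sub finI by (simp add: card_Diff_subset)
    finally have "(\<Sum>j\<in>{1..k}. F (g S j)) = (\<Sum>j\<in>I. F (g S j)) + real (k - card I) * F S" .
    moreover have "card I \<le> k" using card_mono[OF _ I_sub] by simp
    moreover have FS: "F S = f Y" unfolding F_def Y_def Op_def by simp
    ultimately have h: "(\<Sum>j\<in>{1..k}. F (g S j)) = (\<Sum>j\<in>I. F (g S j)) + (real k - real (card I)) * f Y"
      by (simp add: of_nat_diff)
    have e3: "(real k - real (card I)) * f Y = real k * f Y - real (card I) * f Y" by (simp add: left_diff_distrib)
    have e4: "(real k - 2) * f Y = real k * f Y - 2 * f Y" by (simp add: left_diff_distrib)
    have e5: "(real (card I) - 2) * f Y = real (card I) * f Y - 2 * f Y" by (simp add: left_diff_distrib)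
    show ?thesis unfolding FS using h sumI e3 e4 e5 by linarith
  qed
  have finM: "finite (set_pmf M)" unfolding M_def by (rule fin_supp)
  have "measure_pmf.expectation (srrg k P m i) F
      = measure_pmf.expectation M (\<lambda>S. measure_pmf.expectation (map_pmf (g S) (pmf_of_set {1..k})) F)"
    unfolding srrg_i
  proof (rule integral_bind_pmf_fin[of "Pow N"])
    fix x y assume "x \<in> set_pmf M" "y \<in> set_pmf (map_pmf (g x) (pmf_of_set {1..k}))"
    then have "y \<in> set_pmf (srrg k P m i)" unfolding srrg_i by auto
    then show "y \<in> Pow N" using supp indep_N by blast
  qed (use finN finM in auto)
  also have "\<dots> = measure_pmf.expectation M (\<lambda>S. (\<Sum>j\<in>{1..k}. F (g S j)) / real k)"
    using kne by (simp add: integral_pmf_of_set)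
  also have "\<dots> \<ge> measure_pmf.expectation M (\<lambda>S. (1 - 2 / real k) * F S + (1 / real k) * f S)"
  proof (rule integral_mono_AE)
    show "AE x in measure_pmf M. (1 - 2 / real k) * F x + 1 / real k * f x
            \<le> (\<Sum>j\<in>{1..k}. F (g x j)) / real k"
      unfolding AE_measure_pmf_iff
    proof
      fix S assume "S \<in> set_pmf M"
      then have "pm_indep k P S" using supp unfolding M_def by blast
      have "real k > 0" using k_pos by simp
      then have "(1 - 2 / real k) * F S + 1 / real k * f S = ((real k - 2) * F S + f S) / real k"
        by (simp add: field_simps)
      also have "\<dots> \<le> (\<Sum>j\<in>{1..k}. F (g S j)) / real k"
        by (rule divide_right_mono[OF key[OF \<open>pm_indep k P S\<close>]]) simp
      finally show "(1 - 2 / real k) * F S + 1 / real k * f S \<le> (\<Sum>j\<in>{1..k}. F (g S j)) / real k" .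
    qed
  qed (use finM in \<open>auto intro: integrable_measure_pmf_finite\<close>)
  also have "measure_pmf.expectation M (\<lambda>S. (1 - 2 / real k) * F S + (1 / real k) * f S)
      = (1 - 2 / real k) * measure_pmf.expectation M F + (1 / real k) * measure_pmf.expectation M f"
    using finM by (simp add: integrable_measure_pmf_finite)
  finally show ?thesis unfolding F_def M_def using i0 by simp
qed

end
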